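(* Define $b(n)$ by $\sum_{n\ge1}b(n)q^n=-q(q^2;q)_\infty$. Then for every positive integer $n$, $$b(n)=\begin{cases}0, & \text{if } R(\lceil n\rceil_p)\text{ is positive},\\ -1, & \text{if } R(\lceil n\rceil_p)\text{ is odd and negative},\\ 1, & \text{if } R(\lceil n\rceil_p)\text{ is even and negative}.\end{cases}$$
   Context: $(z;q)_\infty=\prod_{j\ge0}(1-zq^j)$. $\mathcal{P}=\{m(3m+1)/2:m\in\mathbb{Z}\}$ is the set of (generalized) pentagonal numbers; for $n=m(3m+1)/2\in\mathcal{P}$ put $R(n)=m$ (well defined). $\lceil n\rceil_p$ is the smallest element of $\mathcal{P}$ that is $\ge n$. *)

theory Defs
  imports "HOL-Computational_Algebra.Formal_Power_Series"
begin

definition pent :: "int \<Rightarrow> int" where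
  "pent m = m * (3 * m + 1) div 2"

definition pentagonals :: "int set" where
  "pentagonals = range pent"

definition R :: "int \<Rightarrow> int" where
  "R n = (THE m. pent m = n)"

definition ceil_p :: "int \<Rightarrow> int" where
  "ceil_p n = (LEAST k. k \<in> pentagonals \<and> n \<le> k)"

text \<open>Coefficients b(n) of -q (q^2;q)_infinity = -q prod_{j>=2}(1-q^j).
  The coefficient of q^n only depends on the factors with j \<le> n, so
  b(n) = - [q^(n-1)] prod_{j=2..n} (1 - q^j)  for n \<ge> 1, and b(0) = 0.\<close>
definition b :: "nat \<Rightarrow> int" where
  "b n = (if n = 0 then 0
          else - fps_nth (\<Prod>j\<in>{2..n}. (1 - fps_X ^ j :: int fps)) (n - 1))"

end

theory Submission
  imports Defs
begin
unbundle fps_syntax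

definition Pr :: "nat \<Rightarrow> nat \<Rightarrow> int fps" where
  "Pr k n = (\<Prod>i\<in>{k<..n}. 1 - fps_X^i)"
definition T :: "nat \<Rightarrow> nat" where "T k = k*(k+1) div 2"
definition F :: "nat \<Rightarrow> nat \<Rightarrow> int fps" where
  "F n k = fps_const ((-1)^k) * fps_X^(n*k + T k) * Pr k n"
definition G :: "nat \<Rightarrow> nat \<Rightarrow> int fps" where
  "G N j = fps_const ((-1)^(Suc j)) * fps_X^(N*(Suc j) + T (Suc j)) * Pr j N"

lemma T_Suc: "T (Suc k) = T k + Suc k"
  unfolding T_def by (induction k) auto
lemma T_0[simp]: "T 0 = 0" by (simp add: T_def)

lemma Pr_Suc_right: "k \<le> N \<Longrightarrow> Pr k (Suc N) = Pr k N * (1 - fps_X^(Suc N))"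
proof -
  assume "k \<le> N"
  then have "{k<..Suc N} = insert (Suc N) {k<..N}" by auto
  then show ?thesis unfolding Pr_def by (simp add: mult.commute)
qed

lemma Pr_Suc_left: "m < N \<Longrightarrow> Pr m N = (1 - fps_X^(Suc m)) * Pr (Suc m) N"
proof -
  assume "m < N"
  then have "{m<..N} = insert (Suc m) {Suc m<..N}" by auto
  then show ?thesis unfolding Pr_def by simp
qed

lemma fc_m1[simp]: "fps_const (-1::int) = -1"
  by (metis fps_const_1_eq_1 fps_const_neg)

lemma Pr_same[simp]: "Pr N N = 1" by (simp add: Pr_def)

lemma tele: "m \<le> N \<Longrightarrow> (\<Sum>k\<le>m. F (Suc N) k - F N k) = G N m"
proof (induction m)
  case 0
  then show ?case
    by (simp add: F_def G_def Pr_Suc_right T_def algebra_simps)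
next
  case (Suc m)
  then have mN: "m < N" by simp
  define Q where "Q = Pr (Suc m) N"
  define s :: "int fps" where "s = fps_const ((-1)^(Suc m))"
  define e where "e = N*(Suc m) + T (Suc m)"
  have e1: "Suc N * Suc m + T (Suc m) = e + Suc m" by (simp add: e_def)
  have e2: "N * Suc m + T (Suc m) = e" by (simp add: e_def)
  have e3: "N * Suc (Suc m) + T (Suc (Suc m)) = e + Suc m + Suc N" by (simp add: e_def T_Suc)
  have F1: "F (Suc N) (Suc m) = s * fps_X^(e + Suc m) * (Q * (1 - fps_X^(Suc N)))"
    unfolding F_def s_def Q_def e1 using Pr_Suc_right[of "Suc m" N] mN by simp
  have F2: "F N (Suc m) = s * fps_X^e * Q"
    unfolding F_def s_def Q_def e2 by simp
  have G1: "G N (Suc m) = - s * fps_X^(e + Suc m + Suc N) * Q"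
    unfolding G_def s_def Q_def e3 by simp
  have G0: "G N m = s * fps_X^e * ((1 - fps_X^(Suc m)) * Q)"
    unfolding G_def s_def Q_def e2 using Pr_Suc_left[OF mN] by simp
  have "(\<Sum>k\<le>Suc m. F (Suc N) k - F N k) = G N m + (F (Suc N) (Suc m) - F N (Suc m))"
    using Suc by simp
  also have "\<dots> = G N (Suc m)"
    unfolding F1 F2 G1 G0 by (simp add: power_add algebra_simps)
  finally show ?case .
qed

definition sg :: "int \<Rightarrow> int" where "sg j = (-1)^(nat \<bar>j\<bar>)"
definition E :: "nat \<Rightarrow> int fps" where
  "E n = (\<Sum>j\<in>{-int n..int n}. fps_const (sg j) * fps_X^(nat (pent j)))"
definition L :: "nat \<Rightarrow> int fps" where "L n = (\<Sum>k\<le>n. F n k)"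

lemma pent2: "2 * pent j = j * (3 * j + 1)"
proof -
  have "even (j * (3 * j + 1))" by auto
  then show ?thesis unfolding pent_def by simp
qed

lemma T2: "2 * T k = k * (k + 1)"
  unfolding T_def by simp

lemma pent_pos: "pent (int (Suc N)) = int (Suc N * Suc N + T (Suc N))"
proof -
  have "2 * pent (int (Suc N)) = 2 * int (Suc N * Suc N + T (Suc N))"
    unfolding pent2 using arg_cong[OF T2[of "Suc N"], of int]
    by (simp add: algebra_simps)
  then show ?thesis by simp
qed

lemma pent_neg: "pent (- int (Suc N)) = int (N * Suc N + T (Suc N))"
proof -
  have "2 * pent (- int (Suc N)) = 2 * int (N * Suc N + T (Suc N))"
    unfolding pent2 using arg_cong[OF T2[of "Suc N"], of int]
    by (simp add: algebra_simps)
  then show ?thesis by simp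
qed

lemma npent_pos: "nat (pent (int (Suc N))) = Suc N * Suc N + T (Suc N)"
  by (simp only: pent_pos nat_int)
lemma npent_neg: "nat (pent (- int (Suc N))) = N * Suc N + T (Suc N)"
  by (simp only: pent_neg nat_int)

lemma E_Suc: "E (Suc N) = E N + fps_const ((-1)^(Suc N)) * fps_X^(Suc N * Suc N + T (Suc N))
   + fps_const ((-1)^(Suc N)) * fps_X^(N * Suc N + T (Suc N))"
proof -
  have S: "{-int (Suc N)..int (Suc N)} = insert (int (Suc N)) (insert (-int (Suc N)) {-int N..int N})"
    by auto
  show ?thesis unfolding E_def S
    by (simp add: npent_pos npent_neg sg_def algebra_simps del: of_nat_Suc)
qed

lemma L_Suc: "L (Suc N) = L N + G N N + F (Suc N) (Suc N)"
proof -
  have "L (Suc N) = (\<Sum>k\<le>N. F (Suc N) k) + F (Suc N) (Suc N)"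
    unfolding L_def by simp
  also have "(\<Sum>k\<le>N. F (Suc N) k) = (\<Sum>k\<le>N. F (Suc N) k - F N k) + L N"
    unfolding L_def by (simp add: sum_subtractf)
  finally show ?thesis using tele[of N N] by simp
qed

lemma L_E: "L n = E n"
proof (induction n)
  case 0
  then show ?case by (simp add: L_def E_def F_def Pr_def sg_def pent_def)
next
  case (Suc N)
  then show ?case unfolding L_Suc E_Suc
    by (simp add: G_def F_def algebra_simps)
qed

lemma F_nth_hi: "1 \<le> k \<Longrightarrow> d \<le> n \<Longrightarrow> F n k $ d = 0"
proof -
  assume k: "1 \<le> k" and d: "d \<le> n"
  have "n * 1 \<le> n * k" using k by (intro mult_le_mono2)
  moreover have "T k \<ge> 1" using k unfolding T_def
    by (cases k) (auto simp: T_def)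
  ultimately have lt: "d < n * k + T k" using d by linarith
  have "F n k = fps_X^(n*k + T k) * (fps_const ((-1)^k) * Pr k n)"
    unfolding F_def by (simp add: algebra_simps)
  then show ?thesis using lt by (simp add: fps_X_power_mult_nth)
qed

lemma coeffE: "d \<le> n \<Longrightarrow> Pr 0 n $ d = E n $ d"
proof -
  assume d: "d \<le> n"
  have "E n $ d = (\<Sum>k\<le>n. F n k $ d)" unfolding L_E[symmetric] L_def fps_sum_nth ..
  also have "\<dots> = (\<Sum>k\<le>n. if k = 0 then Pr 0 n $ d else 0)"
  proof (rule sum.cong)
    fix k assume "k \<in> {..n}"
    show "F n k $ d = (if k = 0 then Pr 0 n $ d else 0)"
      by (cases "k = 0") (simp add: F_def, simp add: F_nth_hi d)
  qed simp
  also have "\<dots> = Pr 0 n $ d" by simp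
  finally show ?thesis by simp
qed

definition P2 :: "nat \<Rightarrow> int fps" where "P2 n = (\<Prod>j\<in>{2..n}. 1 - fps_X^j)"

lemma Pr_P2: "1 \<le> n \<Longrightarrow> Pr 0 n = (1 - fps_X) * P2 n"
proof -
  assume "1 \<le> n"
  then have "{0<..n} = insert 1 {2..n}" by auto
  then show ?thesis unfolding Pr_def P2_def by simp
qed

lemma partial_sum: "(\<Sum>i\<le>d. ((1 - fps_X) * f) $ i) = (f $ d :: int)"
proof (induction d)
  case 0
  then show ?case by (simp add: algebra_simps fps_X_mult_nth)
next
  case (Suc d)
  then show ?case by (simp add: algebra_simps fps_X_mult_nth)
qed

lemma pent_nonneg: "0 \<le> pent j"
proof -
  have "0 \<le> j * (3 * j + 1)"
    by (cases "j \<ge> 0") (auto intro: mult_nonpos_nonpos)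
  then show ?thesis using pent2[of j] by linarith
qed

lemma pent_ge_abs: "\<bar>j\<bar> \<le> pent j"
proof -
  have "2 * \<bar>j\<bar> \<le> j * (3 * j + 1)"
  proof (cases "j \<ge> 0")
    case True
    show ?thesis
    proof (cases "j = 0")
      case False
      then have "j * 1 \<le> j * (3 * j)" using True by (intro mult_left_mono) auto
      then show ?thesis using True by (simp add: algebra_simps)
    qed simp
  next
    case False
    then have "j * (3 * j + 1) = (-j) * (-3 * j - 1)" by (simp add: algebra_simps)
    moreover have "(-j) * 2 \<le> (-j) * (-3 * j - 1)" using False by (intro mult_left_mono) auto
    ultimately show ?thesis using False by simp
  qed
  then show ?thesis using pent2[of j] by linarith
qed

lemma sumE: "(\<Sum>i\<le>d. E n $ i) = (\<Sum>j\<in>{-int n..int n}. if pent j \<le> int d then sg j else 0)"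
proof -
  have "(\<Sum>i\<le>d. E n $ i) = (\<Sum>i\<le>d. \<Sum>j\<in>{-int n..int n}. sg j * (if i = nat (pent j) then 1 else 0))"
    unfolding E_def fps_sum_nth by (simp add: fps_X_power_nth)
  also have "\<dots> = (\<Sum>j\<in>{-int n..int n}. \<Sum>i\<le>d. sg j * (if i = nat (pent j) then 1 else 0))"
    by (rule sum.swap)
  also have "\<dots> = (\<Sum>j\<in>{-int n..int n}. if pent j \<le> int d then sg j else 0)"
  proof (rule sum.cong)
    fix j
    have "(\<Sum>i\<le>d. sg j * (if i = nat (pent j) then 1 else 0)) = (\<Sum>i\<in>{..d}. if i = nat (pent j) then sg j else 0)"
      by (rule sum.cong) auto
    also have "\<dots> = (if nat (pent j) \<in> {..d} then sg j else 0)"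
      by (simp add: sum.delta')
    also have "\<dots> = (if pent j \<le> int d then sg j else 0)"
      using pent_nonneg[of j] by auto
    finally show "(\<Sum>i\<le>d. sg j * (if i = nat (pent j) then 1 else 0)) = (if pent j \<le> int d then sg j else 0)" .
  qed simp
  finally show ?thesis .
qed

lemma pent_diff: "2 * (pent j - pent m) = (j - m) * (3 * (j + m) + 1)"
  using pent2[of j] pent2[of m] by (simp add: algebra_simps)

lemma pent_inj: "pent j = pent m \<Longrightarrow> j = m"
proof -
  assume "pent j = pent m"
  then have "(j - m) * (3 * (j + m) + 1) = 0" using pent_diff[of j m] by simp
  moreover have "3 * (j + m) + 1 \<noteq> 0" by presburger
  ultimately show "j = m" by simp
qed

lemma lt_pos: "0 < m \<Longrightarrow> (pent j < pent m) = (-m \<le> j \<and> j \<le> m - 1)"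
proof -
  assume m: "0 < m"
  have "(pent j < pent m) = ((j - m) * (3 * (j + m) + 1) < 0)" unfolding pent_diff[symmetric] by simp
  also have "\<dots> = (-m \<le> j \<and> j \<le> m - 1)" using m by (auto simp: mult_less_0_iff)
  finally show ?thesis .
qed

lemma lt_neg: "0 < k \<Longrightarrow> (pent j < pent (-k)) = (-(k-1) \<le> j \<and> j \<le> k - 1)"
proof -
  assume k: "0 < k"
  have "(pent j < pent (-k)) = ((j - (-k)) * (3 * (j + (-k)) + 1) < 0)" unfolding pent_diff[symmetric] by simp
  also have "\<dots> = ((j + k) * (3 * (j - k) + 1) < 0)" by simp
  also have "\<dots> = (-(k-1) \<le> j \<and> j \<le> k - 1)" using k by (auto simp: mult_less_0_iff)
  finally show ?thesis .
qed

lemma Bsum: "(\<Sum>j\<in>{-int k..int k}. sg j) = (-1)^k"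
proof (induction k)
  case 0
  then show ?case by (simp add: sg_def)
next
  case (Suc k)
  have S: "{-int (Suc k)..int (Suc k)} = insert (int (Suc k)) (insert (-int (Suc k)) {-int k..int k})"
    by auto
  show ?case unfolding S using Suc by (simp add: sg_def del: of_nat_Suc)
qed

lemma Asum: "(\<Sum>j\<in>{-int k..int k - 1}. sg j) = 0"
proof -
  have S: "{-int k..int k} = insert (int k) {-int k..int k - 1}" by auto
  have "(\<Sum>j\<in>{-int k..int k}. sg j) = sg (int k) + (\<Sum>j\<in>{-int k..int k - 1}. sg j)"
    unfolding S by simp
  then show ?thesis using Bsum[of k] by (simp add: sg_def)
qed

lemma ceil_ex:
  assumes "1 \<le> n"
  shows "\<exists>m. ceil_p n = pent m \<and> n \<le> pent m \<and> (\<forall>j. n \<le> pent j \<longrightarrow> pent m \<le> pent j)"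
proof -
  define S where "S = {k \<in> pentagonals. n \<le> k \<and> k \<le> pent n}"
  have fin: "finite S" unfolding S_def by (rule finite_subset[of _ "{n..pent n}"]) auto
  have pn: "n \<le> pent n" using pent_ge_abs[of n] by simp
  have ne: "pent n \<in> S" unfolding S_def pentagonals_def using pn by auto
  define c where "c = Min S"
  have cS: "c \<in> S" unfolding c_def using fin ne by (intro Min_in) auto
  have cmin: "\<And>y. y \<in> S \<Longrightarrow> c \<le> y" unfolding c_def using fin by auto
  have cle: "\<And>y. y \<in> pentagonals \<and> n \<le> y \<Longrightarrow> c \<le> y"
  proof -
    fix y assume y: "y \<in> pentagonals \<and> n \<le> y"
    show "c \<le> y"
    proof (cases "y \<le> pent n")
      case True then show ?thesis using y cmin unfolding S_def by auto
    next
      case False then show ?thesis using cS unfolding S_def by auto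
    qed
  qed
  have "ceil_p n = c" unfolding ceil_p_def
    by (rule Least_equality) (use cS cle in \<open>auto simp: S_def\<close>)
  moreover obtain m where "c = pent m" using cS unfolding S_def pentagonals_def by auto
  ultimately show ?thesis using cS cle unfolding S_def pentagonals_def by auto
qed

theorem lemma5p3:
  fixes n :: nat
  assumes "n \<ge> 1"
  shows "(R (ceil_p (int n)) > 0 \<longrightarrow> b n = 0)
       \<and> (R (ceil_p (int n)) < 0 \<and> odd (R (ceil_p (int n))) \<longrightarrow> b n = -1)
       \<and> (R (ceil_p (int n)) < 0 \<and> even (R (ceil_p (int n))) \<longrightarrow> b n = 1)"
proof -
  obtain m where c: "ceil_p (int n) = pent m" and nm: "int n \<le> pent m"
    and mmin: "\<And>j. int n \<le> pent j \<Longrightarrow> pent m \<le> pent j"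
    using ceil_ex[of "int n"] assms by auto
  have Rm: "R (ceil_p (int n)) = m" unfolding c R_def
    by (rule the_equality) (auto dest: pent_inj)
  have m0: "m \<noteq> 0" using nm assms by (auto simp: pent_def)
  have "b n = - (P2 n $ (n - 1))" unfolding b_def P2_def using assms by simp
  also have "P2 n $ (n - 1) = (\<Sum>i\<le>n - 1. Pr 0 n $ i)"
    unfolding Pr_P2[OF assms] partial_sum ..
  also have "\<dots> = (\<Sum>i\<le>n - 1. E n $ i)"
    by (rule sum.cong) (auto intro: coeffE)
  also have "\<dots> = (\<Sum>j\<in>{-int n..int n}. if pent j \<le> int (n - 1) then sg j else 0)"
    by (rule sumE)
  also have "\<dots> = sum sg {j \<in> {-int n..int n}. pent j \<le> int (n - 1)}"
    by (rule sum.inter_filter[symmetric]) simp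
  also have "{j \<in> {-int n..int n}. pent j \<le> int (n - 1)} = {j. pent j < pent m}"
  proof (intro set_eqI iffI)
    fix j assume "j \<in> {j \<in> {-int n..int n}. pent j \<le> int (n - 1)}"
    then have "pent j \<le> int (n - 1)" by simp
    moreover have "int (n - 1) < int n" using assms by simp
    ultimately show "j \<in> {j. pent j < pent m}" using nm by simp
  next
    fix j assume "j \<in> {j. pent j < pent m}"
    then have "pent j < pent m" by simp
    then have "pent j < int n" using mmin[of j] by linarith
    then have "pent j \<le> int (n - 1)" using assms by simp
    moreover have "\<bar>j\<bar> \<le> pent j" by (rule pent_ge_abs)
    moreover have "-int n \<le> j \<and> j \<le> int n"
      using \<open>pent j < int n\<close> \<open>\<bar>j\<bar> \<le> pent j\<close> by arith
    ultimately show "j \<in> {j \<in> {-int n..int n}. pent j \<le> int (n - 1)}"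
      by simp
  qed
  finally have bn: "b n = - sum sg {j. pent j < pent m}" .
  show ?thesis
  proof (cases "m > 0")
    case True
    define k where "k = nat m"
    have km: "int k = m" using True by (simp add: k_def)
    have "{j. pent j < pent m} = {-int k..int k - 1}" unfolding km
      using lt_pos[OF True] by (simp add: set_eq_iff)
    then have "b n = 0" using bn Asum by simp
    then show ?thesis using Rm True by simp
  next
    case False
    then have mneg: "m < 0" using m0 by simp
    define k where "k = nat (-m - 1)"
    have mk: "m = - (int k + 1)" using mneg by (simp add: k_def)
    have "{j. pent j < pent m} = {-int k..int k}" unfolding mk
      using lt_neg[of "int k + 1"] by (simp add: set_eq_iff)
    then have "b n = - ((-1)^k)" using bn Bsum by simp
    moreover have "odd m = even k" unfolding mk by simp
    ultimately show ?thesis using Rm mneg by auto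
  qed
qed

end
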